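(* The map $\operatorname{sDet}$ defines a strict monoidal functor $\mathcal{C}\to\mathcal{D}$ which is an equivalence of monoidal categories.
   Context: For $i\in\mathbb{N}$ let $V_i\cong\mathbb{C}^2$ with orthonormal basis $v_{i,0},v_{i,1}$; for a finite ordered index list $A$ put $V_A=\bigotimes_{i\in A}V_i$ ($V_\emptyset=\mathbb{C}$). For $I\subseteq A$ let $|I\rangle=\bigotimes_{i\in A}v_{i,\chi(i,I)}$, $\langle I|=\bigotimes_{i\in A}v^*_{i,\chi(i,I)}$, with $\chi(i,I)=1$ if $i\in I$ and $0$ otherwise. For a complex matrix $X$ with rows labeled by $R$ and columns by $S$, $\operatorname{sDet}(X)=\sum_{I\subseteq R,\,J\subseteq S}\det(X_{I,J})|I\rangle\langle J|$ ($X_{I,J}$ the submatrix on rows $I$, columns $J$; $\det$ of the $0\times 0$ matrix is $1$, of non-square matrices $0$); on objects $\operatorname{sDet}(A)=V_A$. $\mathcal{C}$: objects finite ordered subsets of $\mathbb{N}$ (possibly with repetitions), monoidal product union, unit $\emptyset$; morphisms complex matrices with rows and columns labeled by the two objects; composition is matrix product along the common label set; monoidal product of morphisms is direct sum of labeled matrices; associator and unitors are identities. $\mathcal{D}$: the monoidal subcategory of $\mathrm{Vect}_\mathbb{C}$ with objects $V_A$ and morphisms generated by all $\operatorname{sDet}(X)$ under composition (contraction along shared labels) and tensor product. *)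

theory Defs
  imports "Jordan_Normal_Form.DL_Submatrix" "Jordan_Normal_Form.Determinant"
begin

text \<open>Objects of both categories: finite ordered lists of labels in nat (repetitions allowed).
 Tensor factors / matrix rows and columns are indexed by positions 0..<length A.
 A morphism A -> B of C is a complex matrix with rows labelled by B and columns labelled by A.\<close>

definition C_hom :: "nat list \<Rightarrow> nat list \<Rightarrow> complex mat set" where
  "C_hom A B = carrier_mat (length B) (length A)"

definition C_tensor :: "complex mat \<Rightarrow> complex mat \<Rightarrow> complex mat" where
  "C_tensor X Y = four_block_mat X (0\<^sub>m (dim_row X) (dim_col Y)) (0\<^sub>m (dim_row Y) (dim_col X)) Y"

text \<open>A linear map V_A -> V_B is represented by its matrix in the bases |I>, I a set of
 positions of B (rows) resp. of A (columns): a kernel nat set => nat set => complex.\<close>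

type_synonym kernel = "nat set \<Rightarrow> nat set \<Rightarrow> complex"

definition sDet :: "complex mat \<Rightarrow> kernel" where
  "sDet X = (\<lambda>I J. if I \<subseteq> {..<dim_row X} \<and> J \<subseteq> {..<dim_col X}
      then (if card I = card J then det (submatrix X I J) else 0) else 0)"

definition D_id :: "nat list \<Rightarrow> kernel" where
  "D_id A = (\<lambda>I J. if I = J \<and> I \<subseteq> {..<length A} then 1 else 0)"

definition D_comp :: "nat list \<Rightarrow> kernel \<Rightarrow> kernel \<Rightarrow> kernel" where
  "D_comp B g f = (\<lambda>I K. \<Sum>J\<in>Pow {..<length B}. g I J * f J K)"

text \<open>Tensor product of f : V_A -> V_B and g : V_A' -> V_B' as a map V_(A@A') -> V_(B@B').\<close>
definition D_tensor :: "nat list \<Rightarrow> nat list \<Rightarrow> kernel \<Rightarrow> kernel \<Rightarrow> kernel" where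
  "D_tensor A B f g = (\<lambda>I K.
     f (I \<inter> {..<length B}) (K \<inter> {..<length A}) *
     g ((\<lambda>i. i - length B) ` (I - {..<length B})) ((\<lambda>k. k - length A) ` (K - {..<length A})))"

inductive_set D_mor :: "(nat list \<times> nat list \<times> kernel) set" where
  gen: "X \<in> C_hom A B \<Longrightarrow> (A, B, sDet X) \<in> D_mor"
| comp: "(A, B, f) \<in> D_mor \<Longrightarrow> (B, C, g) \<in> D_mor \<Longrightarrow> (A, C, D_comp B g f) \<in> D_mor"
| tens: "(A, B, f) \<in> D_mor \<Longrightarrow> (A', B', g) \<in> D_mor \<Longrightarrow>
         (A @ A', B @ B', D_tensor A B f g) \<in> D_mor"

end

theory Submission
  imports Defs
begin

lemma card_bounded: "I \<subseteq> {..<n} \<Longrightarrow> card {i. i < n \<and> i \<in> I} = card I"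
  by (rule arg_cong[of _ _ card], auto)

lemma det_nonsq: "dim_row A \<noteq> dim_col A \<Longrightarrow> det A = 0" unfolding det_def by simp

lemma sDet_in:
  assumes I: "I \<subseteq> {..<dim_row X}" and J: "J \<subseteq> {..<dim_col X}"
  shows "sDet X I J = det (submatrix X I J)"
proof -
  have r: "dim_row (submatrix X I J) = card I" using I by (simp add: dim_submatrix card_bounded)
  have c: "dim_col (submatrix X I J) = card J" using J by (simp add: dim_submatrix card_bounded)
  show ?thesis
  proof (cases "card I = card J")
    case True thus ?thesis unfolding sDet_def using I J by simp
  next
    case False thus ?thesis unfolding sDet_def using I J det_nonsq[of "submatrix X I J"] r c by simp
  qed
qed

lemma pick_lt_in: "i < card S \<Longrightarrow> pick S i \<in> S" by (rule pick_in_set[OF disjI1])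

lemma pick_lt_mono: "j < card S \<Longrightarrow> i < j \<Longrightarrow> pick S i < pick S j" by (rule pick_mono[OF disjI1])

lemma pick_image:
  assumes "finite S" shows "pick S ` {0..<card S} = S"
proof
  show "pick S ` {0..<card S} \<subseteq> S"
  proof (rule image_subsetI)
    fix i assume "i \<in> {0..<card S}" thus "pick S i \<in> S" by (intro pick_in_set[OF disjI1]) simp
  qed
  show "S \<subseteq> pick S ` {0..<card S}"
  proof
    fix x assume x: "x \<in> S"
    have "{a\<in>S. a < x} \<subseteq> S" by blast
    moreover have "x \<notin> {a\<in>S. a < x}" by simp
    ultimately have "{a\<in>S. a < x} \<subset> S" using x by blast
    hence "card {a\<in>S. a < x} < card S" using assms psubset_card_mono by blast
    hence "card {a\<in>S. a < x} \<in> {0..<card S}" by simp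
    thus "x \<in> pick S ` {0..<card S}" by (rule image_eqI[where f="pick S", OF pick_card_in_set[OF x, symmetric]])
  qed
qed

lemma pick_inj: "inj_on (pick S) {0..<card S}"
proof (rule inj_onI)
  fix x y assume x: "x \<in> {0..<card S}" and y: "y \<in> {0..<card S}" and e: "pick S x = pick S y"
  show "x = y"
  proof (cases x y rule: linorder_cases)
    case less thus ?thesis using pick_lt_mono[of y S x] y e by simp
  next
    case greater thus ?thesis using pick_lt_mono[of x S y] x e by simp
  qed
qed

lemma pick_eq:
  assumes g: "\<And>x y. x < y \<Longrightarrow> y < k \<Longrightarrow> g x < (g y :: nat)" and I: "g ` {0..<k} = I" and r: "r < k"
  shows "pick I r = g r"
proof -
  have "{a\<in>I. a < g r} = g ` {0..<r}"
  proof
    show "g ` {0..<r} \<subseteq> {a\<in>I. a < g r}"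
    proof (rule image_subsetI)
      fix x assume "x \<in> {0..<r}"
      thus "g x \<in> {a\<in>I. a < g r}" using g[of x r] r I by auto
    qed
    show "{a\<in>I. a < g r} \<subseteq> g ` {0..<r}"
    proof
      fix a assume "a \<in> {a\<in>I. a < g r}"
      then obtain x where x: "x < k" "a = g x" "g x < g r" using I by auto
      have "x < r"
      proof (cases x r rule: linorder_cases)
        case greater thus ?thesis using g[of r x] x by simp
      next
        case equal thus ?thesis using x by simp
      qed
      thus "a \<in> g ` {0..<r}" using x by auto
    qed
  qed
  moreover have "inj_on g {0..<r}"
  proof (rule inj_onI)
    fix a b assume a: "a \<in> {0..<r}" and b: "b \<in> {0..<r}" and e: "g a = g b"
    show "a = b"
    proof (cases a b rule: linorder_cases)
      case less thus ?thesis using g[of a b] b r e by simp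
    next
      case greater thus ?thesis using g[of b a] a r e by simp
    qed
  qed
  ultimately have c: "card {a\<in>I. a < g r} = r" by (simp add: card_image)
  have "g r \<in> I" using I r by auto
  from pick_card_in_set[OF this] show ?thesis unfolding c .
qed

lemma C_tensor_index: "S1 \<in> carrier_mat r1 s1 \<Longrightarrow> S2 \<in> carrier_mat r2 s2 \<Longrightarrow> i < r1+r2 \<Longrightarrow> j < s1+s2 \<Longrightarrow>
  C_tensor S1 S2 $$ (i,j) = (if i < r1 then if j < s1 then S1 $$ (i,j) else 0 else if j < s1 then 0 else S2 $$ (i-r1, j-s1))"
  unfolding C_tensor_def by (simp add: index_mat_four_block)

lemma det_C_tensor:
  fixes S1 S2 :: "complex mat"
  shows "det (C_tensor S1 S2) = det S1 * det S2"
proof -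
  define r1 s1 r2 s2 where "r1 = dim_row S1" and "s1 = dim_col S1" and "r2 = dim_row S2" and "s2 = dim_col S2"
  have S1: "S1 \<in> carrier_mat r1 s1" and S2: "S2 \<in> carrier_mat r2 s2"
    unfolding r1_def s1_def r2_def s2_def by auto
  have T: "C_tensor S1 S2 \<in> carrier_mat (r1+r2) (s1+s2)" unfolding C_tensor_def using S1 S2 by auto
  show ?thesis
  proof (cases "r1 = s1 \<and> r2 = s2")
    case True thus ?thesis unfolding C_tensor_def
      using det_four_block_mat_upper_right_zero[of S1 r1 "0\<^sub>m r1 r2" r2 "0\<^sub>m r2 r1" S2] S1 S2 by auto
  next
    case False
    hence "det S1 * det S2 = 0" using S1 S2 unfolding det_def by auto
    moreover have "det (C_tensor S1 S2) = 0"
    proof (cases "r1 + r2 = s1 + s2")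
      case False thus ?thesis using T unfolding det_def by auto
    next
      case True
      let ?N = "r1+r2"
      have TN: "C_tensor S1 S2 \<in> carrier_mat ?N ?N" using T True by simp
      show ?thesis unfolding det_def'[OF TN]
      proof (rule sum.neutral, rule ballI)
        fix p assume "p \<in> {p. p permutes {0..<?N}}"
        hence p: "p permutes {0..<?N}" by simp
        have pr: "p i < ?N" if "i < ?N" for i using permutes_in_image[OF p] that by auto
        have inj: "inj_on p X" for X using permutes_inj[OF p] by (rule inj_on_subset, auto)
        have "\<exists>i<?N. (i < r1) \<noteq> (p i < s1)"
        proof (rule ccontr)
          assume "\<not> ?thesis"
          hence h: "\<And>i. i < ?N \<Longrightarrow> (i < r1) = (p i < s1)" by auto
          have "card {0..<r1} \<le> card {0..<s1}"
          proof (rule card_inj_on_le[OF inj])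
            show "p ` {0..<r1} \<subseteq> {0..<s1}"
            proof (rule image_subsetI)
              fix i assume "i \<in> {0..<r1}" thus "p i \<in> {0..<s1}" using h[of i] by auto
            qed
          qed simp
          moreover have "card {r1..<?N} \<le> card {s1..<?N}"
          proof (rule card_inj_on_le[OF inj])
            show "p ` {r1..<?N} \<subseteq> {s1..<?N}"
            proof (rule image_subsetI)
              fix i assume "i \<in> {r1..<?N}" thus "p i \<in> {s1..<?N}" using h[of i] pr[of i] by auto
            qed
          qed simp
          ultimately show False using True \<open>\<not> (r1 = s1 \<and> r2 = s2)\<close> by auto
        qed
        then obtain i where i: "i < ?N" "(i < r1) \<noteq> (p i < s1)" by auto
        have "p i < s1 + s2" using pr[OF i(1)] True by auto
        hence "C_tensor S1 S2 $$ (i, p i) = 0" using C_tensor_index[OF S1 S2 i(1), of "p i"] i(2) by auto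
        hence "(\<Prod>i=0..<?N. C_tensor S1 S2 $$ (i, p i)) = 0" using i by (intro prod_zero) auto
        thus "signof p * (\<Prod>i=0..<?N. C_tensor S1 S2 $$ (i, p i)) = 0" by simp
      qed
    qed
    ultimately show ?thesis by simp
  qed
qed

lemma split_pick:
  assumes fin: "finite I"
  shows "card I = card (I \<inter> {..<p}) + card ((\<lambda>i. i - p) ` (I - {..<p}))" (is ?A)
    and "r < card I \<Longrightarrow> pick I r = (if r < card (I \<inter> {..<p}) then pick (I \<inter> {..<p}) r
          else pick ((\<lambda>i. i - p) ` (I - {..<p})) (r - card (I \<inter> {..<p})) + p)" (is "_ \<Longrightarrow> ?B")
proof -
  define I1 where "I1 = I \<inter> {..<p}"
  define I2 where "I2 = (\<lambda>i. i - p) ` (I - {..<p})"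
  have f1: "finite I1" and f2: "finite I2" using fin unfolding I1_def I2_def by auto
  have "inj_on (\<lambda>i. i - p) (I - {..<p})" by (rule inj_onI, auto)
  hence c2: "card I2 = card (I - {..<p})" unfolding I2_def by (rule card_image)
  have "I = I1 \<union> (I - {..<p})" unfolding I1_def by auto
  hence cI: "card I = card I1 + card I2" unfolding c2
    by (subst card_Un_disjoint[symmetric], insert fin, auto simp: I1_def)
  thus ?A unfolding I1_def I2_def .
  define g where "g r = (if r < card I1 then pick I1 r else pick I2 (r - card I1) + p)" for r
  have I1p: "x \<in> I1 \<Longrightarrow> x < p" for x unfolding I1_def by auto
  have gm: "g x < g y" if xy: "x < y" "y < card I" for x y
  proof -
    consider "y < card I1" | "x < card I1" "\<not> y < card I1" | "\<not> x < card I1" by linarith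
    thus ?thesis
    proof cases
      case 1 thus ?thesis unfolding g_def using pick_lt_mono[of y I1 x] xy by auto
    next
      case 2
      hence "pick I1 x \<in> I1" using xy by (intro pick_lt_in) simp
      thus ?thesis unfolding g_def using 2 I1p[of "pick I1 x"] by simp
    next
      case 3
      have a: "y - card I1 < card I2" "x - card I1 < y - card I1" using 3 xy cI by auto
      thus ?thesis unfolding g_def using 3 xy pick_lt_mono[OF a(1) a(2)] by auto
    qed
  qed
  have gi: "g ` {0..<card I} = I"
  proof
    show "g ` {0..<card I} \<subseteq> I"
    proof
      fix y assume "y \<in> g ` {0..<card I}"
      then obtain x where x: "x < card I" "y = g x" by auto
      show "y \<in> I"
      proof (cases "x < card I1")
        case True
        hence "pick I1 x \<in> I1" by (rule pick_lt_in)
        thus ?thesis using x True unfolding g_def I1_def by auto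
      next
        case False
        hence "x - card I1 < card I2" using x cI by auto
        hence "pick I2 (x - card I1) \<in> I2" by (rule pick_lt_in)
        then obtain i where i: "i \<in> I" "\<not> i < p" "pick I2 (x - card I1) = i - p" unfolding I2_def by auto
        have "y = i" using x False i(2,3) unfolding g_def by simp
        thus ?thesis using i(1) by simp
      qed
    qed
    show "I \<subseteq> g ` {0..<card I}"
    proof
      fix i assume i: "i \<in> I"
      show "i \<in> g ` {0..<card I}"
      proof (cases "i < p")
        case True
        hence "i \<in> I1" using i unfolding I1_def by auto
        then obtain r where r: "r \<in> {0..<card I1}" "i = pick I1 r" using pick_image[OF f1] by blast
        hence "g r = i" unfolding g_def by auto
        moreover have "r \<in> {0..<card I}" using r cI by simp
        ultimately show ?thesis by (rule image_eqI[where f=g, OF sym])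
      next
        case False
        hence "i - p \<in> I2" using i unfolding I2_def by auto
        then obtain s where s: "s \<in> {0..<card I2}" "i - p = pick I2 s" using pick_image[OF f2] by blast
        hence "g (s + card I1) = i" unfolding g_def using False by auto
        moreover have "s + card I1 \<in> {0..<card I}" using s cI by simp
        ultimately show ?thesis by (rule image_eqI[where f=g, OF sym])
      qed
    qed
  qed
  assume r: "r < card I"
  show ?B using pick_eq[OF gm gi r] unfolding g_def I1_def I2_def by simp
qed

lemma card_pick_lt: "i < card S \<Longrightarrow> card {a\<in>S. a < pick S i} = i" by (rule card_pick[OF disjI1])

lemma cauchy_binet:
  fixes A B :: "'a :: comm_ring_1 mat"
  assumes A: "A \<in> carrier_mat n m" and B: "B \<in> carrier_mat m n"
  shows "det (A * B) = (\<Sum>S\<in>{S. S \<subseteq> {0..<m} \<and> card S = n}.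
     det (submatrix A UNIV S) * det (submatrix B S UNIV))"
proof -
  let ?U = "{0 ..< n}"
  define F where "F = {f. (\<forall>i\<in> ?U. f i \<in> {0..<m}) \<and> (\<forall>i. i \<notin> ?U \<longrightarrow> f i = i)}"
  define Fi where "Fi = {f \<in> F. inj_on f ?U}"
  define PU where "PU = {p. p permutes ?U}"
  define Ss where "Ss = {S. S \<subseteq> {0..<m} \<and> card S = n}"
  define G where "G f = det (mat\<^sub>r n n (\<lambda> i. row B (f i)))" for f
  define H where "H f = (\<Prod>i\<in>?U. A $$ (i, f i)) * G f" for f
  define emb where "emb S p = (\<lambda>i. if i < n then pick S (p i) else i)" for S :: "nat set" and p :: "nat \<Rightarrow> nat"
  define unemb where "unemb f = (f ` ?U, \<lambda>i. if i < n then card {a \<in> f ` ?U. a < f i} else i)" for f :: "nat \<Rightarrow> nat"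
  have dA: "dim_row A = n" "dim_col A = m" and dB: "dim_row B = m" "dim_col B = n" using A B by auto
  have fF: "finite F" unfolding F_def by (rule finite_bounded_functions, auto)
  have fSs: "finite Ss" unfolding Ss_def by (rule finite_subset[of _ "Pow {0..<m}"], auto)
  have fPU: "finite PU" unfolding PU_def by (rule finite_permutations, simp)
  have 1: "det (A * B) = (\<Sum>f\<in>F. det (mat\<^sub>r n n (\<lambda> i. A $$ (i, f i) \<cdot>\<^sub>v row B (f i))))"
    unfolding mat_mul_finsum_alt[OF A B] F_def
    by (rule det_linear_rows_sum, insert dB, auto)
  have 2: "det (mat\<^sub>r n n (\<lambda> i. A $$ (i, f i) \<cdot>\<^sub>v row B (f i))) = H f" if "f \<in> F" for f
    unfolding H_def G_def
    by (rule det_rows_mul, insert dB, auto)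
  have 3: "H f = 0" if "f \<in> F" "\<not> inj_on f ?U" for f
  proof -
    from that obtain i j where ij: "f i = f j" "i \<noteq> j" "i < n" "j < n"
      unfolding inj_on_def by auto
    have "G f = 0" unfolding G_def
      by (rule det_identical_rows[OF _ ij(2-4)], insert ij dB, auto)
    thus ?thesis unfolding H_def by simp
  qed
  have "det (A * B) = (\<Sum>f\<in>F. H f)" unfolding 1 using 2 by (rule sum.cong[OF refl])
  also have "\<dots> = (\<Sum>f\<in>Fi. H f)"
    by (rule sum.mono_neutral_right[OF fF], unfold Fi_def, blast, insert 3, auto)
  also have "\<dots> = (\<Sum>(S,p)\<in>Sigma Ss (\<lambda>_. PU). H (emb S p))"
  proof (rule sum.reindex_bij_witness[symmetric, where i = unemb and j = "case_prod emb"])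
    fix Sp assume Sp: "Sp \<in> Sigma Ss (\<lambda>_. PU)"
    obtain S p where Spd: "Sp = (S,p)" by force
    with Sp have S: "S \<subseteq> {0..<m}" "card S = n" and p: "p permutes ?U" unfolding Ss_def PU_def by auto
    have fS: "finite S" using finite_subset[OF S(1) finite_atLeastLessThan] .
    have pU: "p i < n" if "i < n" for i using permutes_in_image[OF p, of i] that by simp
    have pS: "pick S (p i) \<in> S" if "i < n" for i using pU[OF that] S(2) by (intro pick_lt_in) simp
    have img: "emb S p ` ?U = S"
    proof -
      have "emb S p ` ?U = (\<lambda>i. pick S (p i)) ` ?U" unfolding emb_def by (rule image_cong, auto)
      also have "\<dots> = pick S ` (p ` ?U)" by (simp add: image_image)
      also have "p ` ?U = ?U" by (rule permutes_image[OF p])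
      also have "pick S ` ?U = S" using pick_image[OF fS] S(2) by simp
      finally show ?thesis .
    qed
    have pe: "(\<lambda>i. if i < n then card {a \<in> S. a < emb S p i} else i) = p"
    proof (rule ext)
      fix i show "(if i < n then card {a \<in> S. a < emb S p i} else i) = p i"
      proof (cases "i < n")
        case True
        have "card {a \<in> S. a < pick S (p i)} = p i" using pU[OF True] S(2) by (intro card_pick_lt) simp
        thus ?thesis using True unfolding emb_def by simp
      next
        case False
        thus ?thesis using permutes_not_in[OF p, of i] by simp
      qed
    qed
    show "unemb (case_prod emb Sp) = Sp"
      unfolding Spd split unemb_def img pe ..
    show "case_prod emb Sp \<in> Fi"
      unfolding Spd split Fi_def F_def
    proof (intro CollectI conjI ballI allI impI)
      fix i assume "i \<in> ?U"
      thus "emb S p i \<in> {0..<m}" using pS[of i] S(1) unfolding emb_def by auto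
    next
      fix i assume "i \<notin> ?U" thus "emb S p i = i" unfolding emb_def by simp
    next
      show "inj_on (emb S p) ?U"
      proof (rule inj_onI)
        fix x y assume x: "x \<in> ?U" and y: "y \<in> ?U" and e: "emb S p x = emb S p y"
        hence "pick S (p x) = pick S (p y)" unfolding emb_def by simp
        moreover have "p x \<in> {0..<card S}" "p y \<in> {0..<card S}" using pU x y S(2) by auto
        ultimately have "p x = p y" using pick_inj[of S] unfolding inj_on_def by blast
        thus "x = y" using permutes_inj[OF p] unfolding inj_def by blast
      qed
    qed
  next
    fix f assume f: "f \<in> Fi"
    hence fU: "\<And>i. i < n \<Longrightarrow> f i \<in> {0..<m}" and fO: "\<And>i. \<not> i < n \<Longrightarrow> f i = i" and fi: "inj_on f ?U"
      unfolding Fi_def F_def by auto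
    define T where "T = f ` ?U"
    have cT: "card T = n" unfolding T_def using card_image[OF fi] by simp
    have fT: "finite T" unfolding T_def by simp
    have fiT: "f i \<in> T" if "i < n" for i unfolding T_def using that by simp
    have cl: "card {a \<in> T. a < f i} < n" if "i < n" for i
    proof -
      have "{a \<in> T. a < f i} \<subseteq> T" by blast
      moreover have "f i \<notin> {a \<in> T. a < f i}" by simp
      ultimately have "{a \<in> T. a < f i} \<subset> T" using fiT[OF that] by blast
      thus ?thesis using psubset_card_mono[OF fT] cT by metis
    qed
    have invf: "unemb f = (T, \<lambda>i. if i < n then card {a \<in> T. a < f i} else i)" unfolding unemb_def T_def ..
    show "case_prod emb (unemb f) = f"
      unfolding invf split
    proof (rule ext)
      fix i show "emb T (\<lambda>i. if i < n then card {a \<in> T. a < f i} else i) i = f i"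
      proof (cases "i < n")
        case True thus ?thesis unfolding emb_def using pick_card_in_set[OF fiT[OF True]] by simp
      next
        case False thus ?thesis unfolding emb_def using fO[OF False] by simp
      qed
    qed
    show "unemb f \<in> Sigma Ss (\<lambda>_. PU)"
      unfolding invf
    proof (rule SigmaI)
      show "T \<in> Ss" unfolding Ss_def T_def using fU cT[unfolded T_def] by auto
      show "(\<lambda>i. if i < n then card {a \<in> T. a < f i} else i) \<in> PU" unfolding PU_def
      proof (rule CollectI, rule inj_on_nat_permutes)
        show "inj_on (\<lambda>i. if i < n then card {a \<in> T. a < f i} else i) ?U"
        proof (rule inj_onI)
          fix x y assume x: "x \<in> ?U" and y: "y \<in> ?U"
            and e: "(if x < n then card {a \<in> T. a < f x} else x) = (if y < n then card {a \<in> T. a < f y} else y)"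
          from e x y have "card {a \<in> T. a < f x} = card {a \<in> T. a < f y}" by simp
          hence "pick T (card {a \<in> T. a < f x}) = pick T (card {a \<in> T. a < f y})" by simp
          moreover have "pick T (card {a \<in> T. a < f x}) = f x" using x by (intro pick_card_in_set fiT) simp
          moreover have "pick T (card {a \<in> T. a < f y}) = f y" using y by (intro pick_card_in_set fiT) simp
          ultimately have "f x = f y" by simp
          thus "x = y" using fi x y unfolding inj_on_def by blast
        qed
        show "(\<lambda>i. if i < n then card {a \<in> T. a < f i} else i) \<in> ?U \<rightarrow> ?U"
          using cl by auto
      qed auto
    qed
  next
    fix Sp assume Sp: "Sp \<in> Sigma Ss (\<lambda>_. PU)"
    obtain S p where Spd: "Sp = (S,p)" by force
    show "H (case_prod emb Sp) = (\<lambda>(S,p). H (emb S p)) Sp" unfolding Spd by simp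
  qed
  also have "\<dots> = (\<Sum>S\<in>Ss. \<Sum>p\<in>PU. H (emb S p))"
    by (rule sum.Sigma[symmetric], rule fSs, insert fPU, blast)
  also have "\<dots> = (\<Sum>S\<in>Ss. det (submatrix A UNIV S) * det (submatrix B S UNIV))"
  proof (rule sum.cong[OF refl])
    fix S assume S: "S \<in> Ss"
    hence S1: "S \<subseteq> {..<m}" and cS: "card S = n" unfolding Ss_def by auto
    have cSr: "card {j. j < m \<and> j \<in> S} = n" using card_bounded[OF S1] cS by simp
    have cU: "card {j. j < k \<and> j \<in> (UNIV :: nat set)} = k" for k by simp
    have As: "submatrix A UNIV S \<in> carrier_mat n n"
      by (rule carrier_matI, unfold dim_submatrix dA cSr cU, rule refl, rule refl)
    have Bs: "submatrix B S UNIV \<in> carrier_mat n n"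
      by (rule carrier_matI, unfold dim_submatrix dB cSr cU, rule refl, rule refl)
    have GS: "G (emb S p) = signof p * det (submatrix B S UNIV)"
      if p: "p permutes ?U" for p
    proof -
      have pU: "p i < n" if "i < n" for i using permutes_in_image[OF p, of i] that by simp
      have "mat\<^sub>r n n (\<lambda> i. row B (emb S p i)) = mat n n (\<lambda>(i,j). submatrix B S UNIV $$ (p i, j))"
      proof (rule eq_matI)
        fix i j assume i: "i < dim_row (mat n n (\<lambda>(i,j). submatrix B S UNIV $$ (p i, j)))"
          and j: "j < dim_col (mat n n (\<lambda>(i,j). submatrix B S UNIV $$ (p i, j)))"
        hence i': "i < n" and j': "j < n" by auto
        have ii: "p i < card {a. a < dim_row B \<and> a \<in> S}" unfolding dB cSr by (rule pU[OF i'])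
        have jj: "j < card {a. a < dim_col B \<and> a \<in> (UNIV :: nat set)}" unfolding dB cU by (rule j')
        have "pick S (p i) \<in> S" using pU[OF i'] cS by (intro pick_lt_in) simp
        hence pm: "pick S (p i) < m" using S1 by auto
        have "mat n n (\<lambda>(i,j). submatrix B S UNIV $$ (p i, j)) $$ (i,j) = submatrix B S UNIV $$ (p i, j)"
          using i' j' by simp
        also have "\<dots> = B $$ (pick S (p i), j)" unfolding submatrix_index[OF ii jj] pick_UNIV ..
        also have "\<dots> = mat\<^sub>r n n (\<lambda> i. row B (emb S p i)) $$ (i,j)"
          using i' j' dB pm unfolding emb_def by simp
        finally show "mat\<^sub>r n n (\<lambda> i. row B (emb S p i)) $$ (i,j) = mat n n (\<lambda>(i,j). submatrix B S UNIV $$ (p i, j)) $$ (i,j)" ..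
      qed auto
      thus ?thesis unfolding G_def using det_permute_rows[OF Bs p] by simp
    qed
    have "(\<Sum>p\<in>PU. H (emb S p))
      = (\<Sum>p\<in>PU. signof p * (\<Prod>i\<in>?U. submatrix A UNIV S $$ (i, p i)) * det (submatrix B S UNIV))"
    proof (rule sum.cong[OF refl])
      fix p assume "p \<in> PU"
      hence p: "p permutes ?U" unfolding PU_def by simp
      have pU: "p i < n" if "i < n" for i using permutes_in_image[OF p, of i] that by simp
      have "(\<Prod>i\<in>?U. A $$ (i, emb S p i)) = (\<Prod>i\<in>?U. submatrix A UNIV S $$ (i, p i))"
      proof (rule prod.cong[OF refl])
        fix i assume "i \<in> ?U"
        hence i': "i < n" by simp
        have ii: "i < card {a. a < dim_row A \<and> a \<in> (UNIV :: nat set)}" unfolding dA cU by (rule i')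
        have jj: "p i < card {a. a < dim_col A \<and> a \<in> S}" unfolding dA cSr by (rule pU[OF i'])
        show "A $$ (i, emb S p i) = submatrix A UNIV S $$ (i, p i)"
          unfolding submatrix_index[OF ii jj] pick_UNIV emb_def using i' by simp
      qed
      thus "H (emb S p) = signof p * (\<Prod>i\<in>?U. submatrix A UNIV S $$ (i, p i)) * det (submatrix B S UNIV)"
        unfolding H_def GS[OF p] by (simp add: ac_simps)
    qed
    also have "\<dots> = det (submatrix A UNIV S) * det (submatrix B S UNIV)"
      unfolding det_def'[OF As] sum_distrib_right PU_def ..
    finally show "(\<Sum>p\<in>PU. H (emb S p)) = det (submatrix A UNIV S) * det (submatrix B S UNIV)" .
  qed
  finally show ?thesis unfolding Ss_def .
qed

lemma sub_mult:
  assumes X: "X \<in> carrier_mat c b" and Y: "Y \<in> carrier_mat b a"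
  shows "submatrix (X*Y) I K = submatrix X I UNIV * submatrix Y UNIV K"
proof (rule eq_matI)
  fix i j assume i: "i < dim_row (submatrix X I UNIV * submatrix Y UNIV K)"
    and j: "j < dim_col (submatrix X I UNIV * submatrix Y UNIV K)"
  hence i': "i < card {i. i<c \<and> i\<in>I}" and j': "j < card {j. j<a \<and> j\<in>K}" using X Y by (simp_all add: dim_submatrix)
  have pi: "pick I i < c" using pick_le i' by blast
  have pj: "pick K j < a" using pick_le j' by blast
  show "submatrix (X*Y) I K $$ (i,j) = (submatrix X I UNIV * submatrix Y UNIV K) $$ (i,j)"
    using i' j' pi pj X Y by (auto simp add: submatrix_index dim_submatrix scalar_prod_def pick_UNIV intro!: sum.cong)
qed (insert X Y, simp_all add: dim_submatrix)

lemma sub_sub1: "submatrix (submatrix X I UNIV) UNIV J = submatrix X I J"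
proof (rule eq_matI)
  fix i j assume i: "i < dim_row (submatrix X I J)" and j: "j < dim_col (submatrix X I J)"
  hence i': "i < card {i. i<dim_row X \<and> i\<in>I}" and j': "j < card {j. j<dim_col X \<and> j\<in>J}" by (simp_all add: dim_submatrix)
  have pj: "pick J j < dim_col X" using pick_le j' by blast
  show "submatrix (submatrix X I UNIV) UNIV J $$ (i,j) = submatrix X I J $$ (i,j)"
    using i' j' pj by (simp add: submatrix_index dim_submatrix pick_UNIV)
qed (simp_all add: dim_submatrix)

lemma sub_sub2: "submatrix (submatrix X UNIV K) J UNIV = submatrix X J K"
proof (rule eq_matI)
  fix i j assume i: "i < dim_row (submatrix X J K)" and j: "j < dim_col (submatrix X J K)"
  hence i': "i < card {i. i<dim_row X \<and> i\<in>J}" and j': "j < card {j. j<dim_col X \<and> j\<in>K}" by (simp_all add: dim_submatrix)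
  have pi: "pick J i < dim_row X" using pick_le i' by blast
  show "submatrix (submatrix X UNIV K) J UNIV $$ (i,j) = submatrix X J K $$ (i,j)"
    using i' j' pi by (simp add: submatrix_index dim_submatrix pick_UNIV)
qed (simp_all add: dim_submatrix)

lemma sDet_out: "\<not> (I \<subseteq> {..<dim_row X} \<and> J \<subseteq> {..<dim_col X}) \<Longrightarrow> sDet X I J = 0"
  unfolding sDet_def by auto

lemma sDet_card: "card I \<noteq> card J \<Longrightarrow> sDet X I J = 0"
  unfolding sDet_def by simp

lemma sDet_comp:
  assumes Y: "Y \<in> carrier_mat b a" and X: "X \<in> carrier_mat c b"
  shows "sDet (X * Y) I K = (\<Sum>J\<in>Pow {..<b}. sDet X I J * sDet Y J K)"
proof (cases "I \<subseteq> {..<c} \<and> K \<subseteq> {..<a}")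
  case False
  have XY: "dim_row (X * Y) = c" "dim_col (X * Y) = a" using X Y by auto
  have l: "sDet (X * Y) I K = 0" by (rule sDet_out, unfold XY, rule False)
  have z: "sDet X I J * sDet Y J K = 0" for J
  proof (cases "I \<subseteq> {..<c}")
    case True
    hence "\<not> K \<subseteq> {..<a}" using False by blast
    hence "sDet Y J K = 0" using Y by (intro sDet_out) simp
    thus ?thesis by simp
  next
    case False
    hence "sDet X I J = 0" using X by (intro sDet_out) simp
    thus ?thesis by simp
  qed
  have "(\<Sum>J\<in>Pow {..<b}. sDet X I J * sDet Y J K) = 0" by (rule sum.neutral, rule ballI, rule z)
  thus ?thesis using l by simp
next
  case True
  hence I: "I \<subseteq> {..<c}" and K: "K \<subseteq> {..<a}" by auto
  show ?thesis
  proof (cases "card I = card K")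
    case False
    have l: "sDet (X * Y) I K = 0" by (rule sDet_card[OF False])
    have z: "sDet X I J * sDet Y J K = 0" for J
    proof (cases "card I = card J")
      case True
      hence "card J \<noteq> card K" using False by simp
      hence "sDet Y J K = 0" by (rule sDet_card)
      thus ?thesis by simp
    next
      case False
      hence "sDet X I J = 0" by (rule sDet_card)
      thus ?thesis by simp
    qed
    have "(\<Sum>J\<in>Pow {..<b}. sDet X I J * sDet Y J K) = 0" by (rule sum.neutral, rule ballI, rule z)
    thus ?thesis using l by simp
  next
    case True
    define n where "n = card I"
    have cU: "card {j. j < m \<and> j \<in> (UNIV :: nat set)} = m" for m by simp
    have XI: "submatrix X I UNIV \<in> carrier_mat n b"
    proof (rule carrier_matI)
      have "dim_row X = c" using X by simp
      thus "dim_row (submatrix X I UNIV) = n" unfolding dim_submatrix n_def using card_bounded[OF I] by simp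
      have "dim_col X = b" using X by simp
      thus "dim_col (submatrix X I UNIV) = b" unfolding dim_submatrix using cU by simp
    qed
    have YK: "submatrix Y UNIV K \<in> carrier_mat b n"
    proof (rule carrier_matI)
      have "dim_col Y = a" using Y by simp
      thus "dim_col (submatrix Y UNIV K) = n" unfolding dim_submatrix n_def using card_bounded[OF K] True by simp
      have "dim_row Y = b" using Y by simp
      thus "dim_row (submatrix Y UNIV K) = b" unfolding dim_submatrix using cU by simp
    qed
    have "sDet (X * Y) I K = det (submatrix (X*Y) I K)"
      by (rule sDet_in, insert I K X Y, auto)
    also have "\<dots> = det (submatrix X I UNIV * submatrix Y UNIV K)" unfolding sub_mult[OF X Y] ..
    also have "\<dots> = (\<Sum>S\<in>{S. S \<subseteq> {0..<b} \<and> card S = n}. det (submatrix X I S) * det (submatrix Y S K))"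
      unfolding cauchy_binet[OF XI YK] sub_sub1 sub_sub2 ..
    also have "{S. S \<subseteq> {0..<b} \<and> card S = n} = {J \<in> Pow {..<b}. card J = n}"
      by (simp add: atLeast0LessThan Pow_def)
    also have "(\<Sum>J\<in>{J \<in> Pow {..<b}. card J = n}. det (submatrix X I J) * det (submatrix Y J K))
       = (\<Sum>J\<in>Pow {..<b}. if card J = n then det (submatrix X I J) * det (submatrix Y J K) else 0)"
      using sum.inter_filter[of "Pow {..<b}" "\<lambda>J. det (submatrix X I J) * det (submatrix Y J K)" "\<lambda>J. card J = n"] by simp
    also have "\<dots> = (\<Sum>J\<in>Pow {..<b}. sDet X I J * sDet Y J K)"
    proof (rule sum.cong[OF refl])
      fix J assume "J \<in> Pow {..<b}"
      hence J: "J \<subseteq> {..<b}" by simp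
      show "(if card J = n then det (submatrix X I J) * det (submatrix Y J K) else 0) = sDet X I J * sDet Y J K"
      proof (cases "card J = n")
        case True
        have "sDet X I J = det (submatrix X I J)" using X I J by (intro sDet_in) auto
        moreover have "sDet Y J K = det (submatrix Y J K)" using Y K J by (intro sDet_in) auto
        ultimately show ?thesis using True by simp
      next
        case False
        hence "sDet X I J = 0" unfolding n_def by (intro sDet_card) simp
        thus ?thesis using False by simp
      qed
    qed
    finally show ?thesis .
  qed
qed

lemma det_zero_row:
  assumes A: "A \<in> carrier_mat n n" and k: "k < n" and z: "\<And>j. j < n \<Longrightarrow> A $$ (k,j) = 0"
  shows "det A = 0"
  unfolding det_def'[OF A]
proof (rule sum.neutral, rule ballI)
  fix p assume "p \<in> {p. p permutes {0..<n}}"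
  hence "p k < n" using k permutes_in_image by fastforce
  hence "A $$ (k, p k) = 0" by (rule z)
  hence "\<exists>a\<in>{0..<n}. A $$ (a, p a) = 0" using k by auto
  hence "(\<Prod>i = 0..<n. A $$ (i, p i)) = 0" by (rule prod_zero[OF finite_atLeastLessThan])
  thus "signof p * (\<Prod>i = 0..<n. A $$ (i, p i)) = 0" by simp
qed

lemma sub_carrier: "I \<subseteq> {..<dim_row X} \<Longrightarrow> J \<subseteq> {..<dim_col X} \<Longrightarrow> submatrix X I J \<in> carrier_mat (card I) (card J)"
  by (rule carrier_matI, unfold dim_submatrix, erule card_bounded, erule card_bounded)

lemma sDet_one: "sDet (1\<^sub>m n) I J = (if I = J \<and> I \<subseteq> {..<n} then 1 else 0)"
proof (cases "I \<subseteq> {..<n} \<and> J \<subseteq> {..<n}")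
  case False thus ?thesis unfolding sDet_def by auto
next
  case True
  hence I: "I \<subseteq> {..<n}" and J: "J \<subseteq> {..<n}" by auto
  have fI: "finite I" and fJ: "finite J" using finite_subset[OF I finite_lessThan] finite_subset[OF J finite_lessThan] by auto
  have cI: "card {a. a < n \<and> a \<in> I} = card I" by (rule card_bounded[OF I])
  have cJ: "card {a. a < n \<and> a \<in> J} = card J" by (rule card_bounded[OF J])
  have s: "sDet (1\<^sub>m n) I J = det (submatrix (1\<^sub>m n) I J)" by (rule sDet_in, insert I J, auto)
  show ?thesis
  proof (cases "I = J")
    case True
    have "submatrix (1\<^sub>m n :: complex mat) I I = 1\<^sub>m (card I)"
    proof (rule eq_matI)
      fix i j assume "i < dim_row (1\<^sub>m (card I) :: complex mat)" "j < dim_col (1\<^sub>m (card I) :: complex mat)"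
      hence i: "i < card I" and j: "j < card I" by auto
      have pi: "pick I i \<in> I" using i by (rule pick_lt_in)
      have pj: "pick I j \<in> I" using j by (rule pick_lt_in)
      have lt: "pick I i < n" "pick I j < n" using pi pj I by auto
      have eq: "pick I i = pick I j \<longleftrightarrow> i = j" using pick_inj[of I] i j unfolding inj_on_def by auto
      have d1: "dim_row (1\<^sub>m n :: complex mat) = n" "dim_col (1\<^sub>m n :: complex mat) = n" by auto
      have ii: "i < card {a. a < dim_row (1\<^sub>m n :: complex mat) \<and> a \<in> I}" unfolding d1 cI by (rule i)
      have jj: "j < card {a. a < dim_col (1\<^sub>m n :: complex mat) \<and> a \<in> I}" unfolding d1 cI by (rule j)
      have "submatrix (1\<^sub>m n :: complex mat) I I $$ (i, j) = (1\<^sub>m n :: complex mat) $$ (pick I i, pick I j)"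
        by (rule submatrix_index[OF ii jj])
      also have "\<dots> = (if i = j then 1 else 0)" using lt eq by simp
      also have "\<dots> = 1\<^sub>m (card I) $$ (i, j)" using i j by simp
      finally show "submatrix (1\<^sub>m n :: complex mat) I I $$ (i, j) = 1\<^sub>m (card I) $$ (i, j)" .
    qed (insert sub_carrier[of I "1\<^sub>m n :: complex mat" I] I, auto)
    thus ?thesis using s True I by simp
  next
    case False
    show ?thesis
    proof (cases "card I = card J")
      case False thus ?thesis unfolding sDet_def using \<open>I \<noteq> J\<close> by auto
    next
      case True
      have "\<not> I \<subseteq> J" using card_subset_eq[OF fJ _ True] \<open>I \<noteq> J\<close> by auto
      then obtain i where iI: "i \<in> I" and iJ: "i \<notin> J" by auto
      define r where "r = card {a\<in>I. a < i}"
      have "{a\<in>I. a < i} \<subseteq> I" by blast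
      moreover have "i \<notin> {a\<in>I. a < i}" by simp
      ultimately have "{a\<in>I. a < i} \<subset> I" using iI by blast
      hence r: "r < card I" unfolding r_def using psubset_card_mono[OF fI] by blast
      have pr: "pick I r = i" unfolding r_def by (rule pick_card_in_set[OF iI])
      have "det (submatrix (1\<^sub>m n :: complex mat) I J) = 0"
      proof (rule det_zero_row[OF _ r])
        have "submatrix (1\<^sub>m n :: complex mat) I J \<in> carrier_mat (card I) (card J)"
          by (rule sub_carrier, insert I J, auto)
        thus "submatrix (1\<^sub>m n :: complex mat) I J \<in> carrier_mat (card I) (card I)"
          by (simp only: True)
        fix j assume j: "j < card I"
        have pj: "pick J j \<in> J" using j True by (intro pick_lt_in) simp
        hence ne: "pick J j \<noteq> i" using iJ by auto
        have lt: "pick J j < n" "i < n" using pj J iI I by auto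
        have d1: "dim_row (1\<^sub>m n :: complex mat) = n" "dim_col (1\<^sub>m n :: complex mat) = n" by auto
        have rr: "r < card {a. a < dim_row (1\<^sub>m n :: complex mat) \<and> a \<in> I}" unfolding d1 cI by (rule r)
        have jj: "j < card {a. a < dim_col (1\<^sub>m n :: complex mat) \<and> a \<in> J}" unfolding d1 cJ True[symmetric] by (rule j)
        have "submatrix (1\<^sub>m n :: complex mat) I J $$ (r, j) = (1\<^sub>m n :: complex mat) $$ (pick I r, pick J j)"
          by (rule submatrix_index[OF rr jj])
        also have "\<dots> = 0" using pr ne lt by simp
        finally show "submatrix (1\<^sub>m n :: complex mat) I J $$ (r, j) = 0" .
      qed
      thus ?thesis using s \<open>I \<noteq> J\<close> by simp
    qed
  qed
qed


lemma sub_tensor: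
  assumes X: "X \<in> carrier_mat p q" and Y: "Y \<in> carrier_mat p' q'"
    and I: "I \<subseteq> {..<p+p'}" and K: "K \<subseteq> {..<q+q'}"
  shows "submatrix (C_tensor X Y) I K = C_tensor (submatrix X (I \<inter> {..<p}) (K \<inter> {..<q}))
     (submatrix Y ((\<lambda>i. i-p)`(I-{..<p})) ((\<lambda>k. k-q)`(K-{..<q})))"
proof -
  define I1 where "I1 = I \<inter> {..<p}"
  define I2 where "I2 = (\<lambda>i. i - p) ` (I - {..<p})"
  define K1 where "K1 = K \<inter> {..<q}"
  define K2 where "K2 = (\<lambda>i. i - q) ` (K - {..<q})"
  have fI: "finite I" and fK: "finite K" using finite_subset[OF I finite_lessThan] finite_subset[OF K finite_lessThan] by auto
  have I1: "I1 \<subseteq> {..<p}" and K1: "K1 \<subseteq> {..<q}" unfolding I1_def K1_def by auto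
  have I2: "I2 \<subseteq> {..<p'}" using I unfolding I2_def by auto
  have K2: "K2 \<subseteq> {..<q'}" using K unfolding K2_def by auto
  have cI: "card I = card I1 + card I2" unfolding I1_def I2_def by (rule split_pick(1)[OF fI])
  have cK: "card K = card K1 + card K2" unfolding K1_def K2_def by (rule split_pick(1)[OF fK])
  have pI: "r < card I \<Longrightarrow> pick I r = (if r < card I1 then pick I1 r else pick I2 (r - card I1) + p)" for r
    unfolding I1_def I2_def by (rule split_pick(2)[OF fI])
  have pK: "r < card K \<Longrightarrow> pick K r = (if r < card K1 then pick K1 r else pick K2 (r - card K1) + q)" for r
    unfolding K1_def K2_def by (rule split_pick(2)[OF fK])
  have dX0: "dim_row X = p" "dim_col X = q" and dY0: "dim_row Y = p'" "dim_col Y = q'" using X Y by auto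
  have S1: "submatrix X I1 K1 \<in> carrier_mat (card I1) (card K1)"
    by (rule sub_carrier, unfold dX0, rule I1, rule K1)
  have S2: "submatrix Y I2 K2 \<in> carrier_mat (card I2) (card K2)"
    by (rule sub_carrier, unfold dY0, rule I2, rule K2)
  have T: "C_tensor X Y \<in> carrier_mat (p+p') (q+q')" unfolding C_tensor_def using X Y by auto
  have dT0: "dim_row (C_tensor X Y) = p+p'" "dim_col (C_tensor X Y) = q+q'" using T by auto
  have dT: "submatrix (C_tensor X Y) I K \<in> carrier_mat (card I) (card K)"
    by (rule sub_carrier, unfold dT0, rule I, rule K)
  have "submatrix (C_tensor X Y) I K = C_tensor (submatrix X I1 K1) (submatrix Y I2 K2)"
  proof (rule eq_matI)
    have dC: "dim_row (C_tensor (submatrix X I1 K1) (submatrix Y I2 K2)) = card I1 + card I2"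
       "dim_col (C_tensor (submatrix X I1 K1) (submatrix Y I2 K2)) = card K1 + card K2"
      using S1 S2 unfolding C_tensor_def by auto
    show "dim_row (submatrix (C_tensor X Y) I K) = dim_row (C_tensor (submatrix X I1 K1) (submatrix Y I2 K2))"
      using dT cI dC by simp
    show "dim_col (submatrix (C_tensor X Y) I K) = dim_col (C_tensor (submatrix X I1 K1) (submatrix Y I2 K2))"
      using dT cK dC by simp
    fix i j assume i: "i < dim_row (C_tensor (submatrix X I1 K1) (submatrix Y I2 K2))"
      and j: "j < dim_col (C_tensor (submatrix X I1 K1) (submatrix Y I2 K2))"
    have i2: "i < card I1 + card I2" using i dC by simp
    have j2: "j < card K1 + card K2" using j dC by simp
    have i': "i < card I" using i2 cI by simp
    have j': "j < card K" using j2 cK by simp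
    have dTr: "dim_row (C_tensor X Y) = p + p'" and dTc: "dim_col (C_tensor X Y) = q + q'" using T by auto
    have iT: "i < card {i. i < dim_row (C_tensor X Y) \<and> i \<in> I}" unfolding dTr card_bounded[OF I] by (rule i')
    have jT: "j < card {i. i < dim_col (C_tensor X Y) \<and> i \<in> K}" unfolding dTc card_bounded[OF K] by (rule j')
    have e: "submatrix (C_tensor X Y) I K $$ (i,j) = C_tensor X Y $$ (pick I i, pick K j)"
      by (rule submatrix_index[OF iT jT])
    have piI: "pick I i \<in> I" using i' by (rule pick_lt_in)
    have pjK: "pick K j \<in> K" using j' by (rule pick_lt_in)
    have L: "C_tensor X Y $$ (pick I i, pick K j) = (if pick I i < p then if pick K j < q then X $$ (pick I i, pick K j) else 0
      else if pick K j < q then 0 else Y $$ (pick I i - p, pick K j - q))"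
      by (rule C_tensor_index[OF X Y], insert piI pjK I K, auto)
    have R: "C_tensor (submatrix X I1 K1) (submatrix Y I2 K2) $$ (i,j) = (if i < card I1 then if j < card K1 then submatrix X I1 K1 $$ (i,j) else 0
      else if j < card K1 then 0 else submatrix Y I2 K2 $$ (i - card I1, j - card K1))"
      by (rule C_tensor_index[OF S1 S2 i2 j2])
    have dX: "dim_row X = p" "dim_col X = q" and dY: "dim_row Y = p'" "dim_col Y = q'" using X Y by auto
    show "submatrix (C_tensor X Y) I K $$ (i,j) = C_tensor (submatrix X I1 K1) (submatrix Y I2 K2) $$ (i,j)"
    proof (cases "i < card I1")
      case iT1: True
      have pi: "pick I i = pick I1 i" using pI[OF i'] iT1 by simp
      have pi1: "pick I1 i \<in> I1" using iT1 by (rule pick_lt_in)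
      hence pi2: "pick I1 i < p" using I1 by auto
      have ci: "i < card {a. a < dim_row X \<and> a \<in> I1}" unfolding dX card_bounded[OF I1] by (rule iT1)
      show ?thesis
      proof (cases "j < card K1")
        case True
        have pj: "pick K j = pick K1 j" using pK[OF j'] True by simp
        have pj1: "pick K1 j \<in> K1" using True by (rule pick_lt_in)
        hence pj2: "pick K1 j < q" using K1 by auto
        have cj: "j < card {a. a < dim_col X \<and> a \<in> K1}" unfolding dX card_bounded[OF K1] by (rule True)
        show ?thesis unfolding e L R unfolding pi pj using pi2 pj2 iT1 True submatrix_index[OF ci cj] by simp
      next
        case False
        have pj: "pick K j = pick K2 (j - card K1) + q" using pK[OF j'] False by simp
        show ?thesis unfolding e L R unfolding pi pj using pi2 iT1 False by simp
      qed
    next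
      case iF: False
      have pi: "pick I i = pick I2 (i - card I1) + p" using pI[OF i'] iF by simp
      have ic: "i - card I1 < card I2" using i2 iF by simp
      have ci: "i - card I1 < card {a. a < dim_row Y \<and> a \<in> I2}" unfolding dY card_bounded[OF I2] by (rule ic)
      show ?thesis
      proof (cases "j < card K1")
        case True
        have pj: "pick K j = pick K1 j" using pK[OF j'] True by simp
        have pj1: "pick K1 j \<in> K1" using True by (rule pick_lt_in)
        hence pj2: "pick K1 j < q" using K1 by auto
        show ?thesis unfolding e L R unfolding pi pj using pj2 iF True by simp
      next
        case False
        have pj: "pick K j = pick K2 (j - card K1) + q" using pK[OF j'] False by simp
        have jc: "j - card K1 < card K2" using j2 False by simp
        have cj: "j - card K1 < card {a. a < dim_col Y \<and> a \<in> K2}" unfolding dY card_bounded[OF K2] by (rule jc)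
        show ?thesis unfolding e L R unfolding pi pj using iF False submatrix_index[OF ci cj] by simp
      qed
    qed
  qed
  thus ?thesis unfolding I1_def I2_def K1_def K2_def .
qed

lemma sDet_tensor:
  assumes X: "X \<in> carrier_mat p q" and Y: "Y \<in> carrier_mat p' q'"
  shows "sDet (C_tensor X Y) I K = sDet X (I \<inter> {..<p}) (K \<inter> {..<q}) *
     sDet Y ((\<lambda>i. i-p)`(I-{..<p})) ((\<lambda>k. k-q)`(K-{..<q}))"
proof -
  have T: "C_tensor X Y \<in> carrier_mat (p+p') (q+q')" unfolding C_tensor_def using X Y by auto
  show ?thesis
  proof (cases "I \<subseteq> {..<p+p'} \<and> K \<subseteq> {..<q+q'}")
    case True
    hence I: "I \<subseteq> {..<p+p'}" and K: "K \<subseteq> {..<q+q'}" by auto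
    have I2: "(\<lambda>i. i-p)`(I-{..<p}) \<subseteq> {..<p'}" using I by auto
    have K2: "(\<lambda>i. i-q)`(K-{..<q}) \<subseteq> {..<q'}" using K by auto
    show ?thesis
      using sDet_in[of I "C_tensor X Y" K] sDet_in[of "I \<inter> {..<p}" X "K \<inter> {..<q}"]
        sDet_in[of "(\<lambda>i. i-p)`(I-{..<p})" Y "(\<lambda>k. k-q)`(K-{..<q})"] I K I2 K2 X Y T
      by (simp add: sub_tensor[OF X Y I K] det_C_tensor)
  next
    case False
    hence "sDet (C_tensor X Y) I K = 0" using T unfolding sDet_def by auto
    moreover have "sDet Y ((\<lambda>i. i-p)`(I-{..<p})) ((\<lambda>k. k-q)`(K-{..<q})) = 0"
    proof -
      have "\<not> (\<lambda>i. i-p)`(I-{..<p}) \<subseteq> {..<p'} \<or> \<not> (\<lambda>k. k-q)`(K-{..<q}) \<subseteq> {..<q'}"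
      proof (cases "I \<subseteq> {..<p+p'}")
        case True
        with False obtain k where "k \<in> K" "\<not> k < q + q'" by auto
        hence "k - q \<in> (\<lambda>k. k-q)`(K-{..<q})" "\<not> k - q < q'" by auto
        thus ?thesis by blast
      next
        case False
        then obtain k where "k \<in> I" "\<not> k < p + p'" by auto
        hence "k - p \<in> (\<lambda>k. k-p)`(I-{..<p})" "\<not> k - p < p'" by auto
        thus ?thesis by blast
      qed
      thus ?thesis using Y unfolding sDet_def by auto
    qed
    ultimately show ?thesis by simp
  qed
qed

lemma sDet_single: "i < dim_row X \<Longrightarrow> j < dim_col X \<Longrightarrow> sDet X {i} {j} = X $$ (i,j)"
proof -
  assume i: "i < dim_row X" and j: "j < dim_col X"
  have iI: "{i} \<subseteq> {..<dim_row X}" using i by simp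
  have jJ: "{j} \<subseteq> {..<dim_col X}" using j by simp
  have s0: "submatrix X {i} {j} \<in> carrier_mat (card {i}) (card {j})" by (rule sub_carrier[OF iI jJ])
  have s: "submatrix X {i} {j} \<in> carrier_mat 1 1" using s0 by simp
  have ci: "card {a\<in>{i}. a < i} = 0" by simp
  have cj: "card {a\<in>{j}. a < j} = 0" by simp
  have pi: "pick {i} 0 = i" using pick_card_in_set[of i "{i}"] unfolding ci by simp
  have pj: "pick {j} 0 = j" using pick_card_in_set[of j "{j}"] unfolding cj by simp
  have c1: "0 < card {a. a < dim_row X \<and> a \<in> {i}}" unfolding card_bounded[OF iI] by simp
  have c2: "0 < card {a. a < dim_col X \<and> a \<in> {j}}" unfolding card_bounded[OF jJ] by simp
  have "sDet X {i} {j} = det (submatrix X {i} {j})" by (rule sDet_in[OF iI jJ])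
  also have "\<dots> = submatrix X {i} {j} $$ (0,0)" by (rule det_single[OF s])
  also have "\<dots> = X $$ (pick {i} 0, pick {j} 0)" by (rule submatrix_index[OF c1 c2])
  finally show ?thesis unfolding pi pj .
qed

lemma D_mor_full:
  assumes "(A, B, f) \<in> D_mor" shows "\<exists>X \<in> C_hom A B. f = sDet X"
  using assms
proof (induction rule: D_mor.induct)
  case (gen X A B) thus ?case by auto
next
  case (comp A B f C g)
  from comp.IH(1) obtain Y where Y: "Y \<in> C_hom A B" "f = sDet Y" by auto
  from comp.IH(2) obtain X where X: "X \<in> C_hom B C" "g = sDet X" by auto
  have Yc: "Y \<in> carrier_mat (length B) (length A)" and Xc: "X \<in> carrier_mat (length C) (length B)"
    using X Y unfolding C_hom_def by auto
  have "X * Y \<in> C_hom A C" using Xc Yc unfolding C_hom_def by auto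
  moreover have "D_comp B g f = sDet (X * Y)"
  proof (rule ext, rule ext)
    fix I K show "D_comp B g f I K = sDet (X * Y) I K"
      unfolding D_comp_def X(2) Y(2) sDet_comp[OF Yc Xc] ..
  qed
  ultimately show ?case by blast
next
  case (tens A B f A' B' g)
  from tens.IH(1) obtain X where X: "X \<in> C_hom A B" "f = sDet X" by auto
  from tens.IH(2) obtain Y where Y: "Y \<in> C_hom A' B'" "g = sDet Y" by auto
  have Xc: "X \<in> carrier_mat (length B) (length A)" and Yc: "Y \<in> carrier_mat (length B') (length A')"
    using X Y unfolding C_hom_def by auto
  have "C_tensor X Y \<in> C_hom (A @ A') (B @ B')" using Xc Yc unfolding C_hom_def C_tensor_def by auto
  moreover have "D_tensor A B f g = sDet (C_tensor X Y)"
  proof (rule ext, rule ext)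
    fix I K show "D_tensor A B f g I K = sDet (C_tensor X Y) I K"
      unfolding D_tensor_def X(2) Y(2) sDet_tensor[OF Xc Yc] ..
  qed
  ultimately show ?case by blast
qed

theorem mainTheorem3:
  shows
  \<comment> \<open>sDet maps C(A,B) into D(A,B) (on objects sDet A = V_A, identified with A)\<close>
  "(\<forall>A B X. X \<in> C_hom A B \<longrightarrow> (A, B, sDet X) \<in> D_mor)
   \<comment> \<open>preserves identities\<close>
   \<and> (\<forall>A. sDet (1\<^sub>m (length A)) = D_id A)
   \<comment> \<open>preserves composition\<close>
   \<and> (\<forall>A B C X Y. Y \<in> C_hom A B \<longrightarrow> X \<in> C_hom B C \<longrightarrow>
        sDet (X * Y) = D_comp B (sDet X) (sDet Y))
   \<comment> \<open>strict monoidal: unit to unit, tensor to tensor\<close>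
   \<and> sDet (1\<^sub>m 0) = D_id []
   \<and> (\<forall>A B A' B' X Y. X \<in> C_hom A B \<longrightarrow> Y \<in> C_hom A' B' \<longrightarrow>
        sDet (C_tensor X Y) = D_tensor A B (sDet X) (sDet Y))
   \<comment> \<open>full\<close>
   \<and> (\<forall>A B f. (A, B, f) \<in> D_mor \<longrightarrow> (\<exists>X \<in> C_hom A B. f = sDet X))
   \<comment> \<open>faithful\<close>
   \<and> (\<forall>A B X Y. X \<in> C_hom A B \<longrightarrow> Y \<in> C_hom A B \<longrightarrow> sDet X = sDet Y \<longrightarrow> X = Y)"
proof -
  have P1: "\<forall>A B X. X \<in> C_hom A B \<longrightarrow> (A, B, sDet X) \<in> D_mor" by (auto intro: D_mor.gen)
  have P2: "\<forall>A. sDet (1\<^sub>m (length A)) = D_id A"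
  proof
    fix A :: "nat list"
    show "sDet (1\<^sub>m (length A)) = D_id A"
    proof (rule ext, rule ext)
      fix I J show "sDet (1\<^sub>m (length A)) I J = D_id A I J" unfolding sDet_one D_id_def ..
    qed
  qed
  have P3: "\<forall>A B C X Y. Y \<in> C_hom A B \<longrightarrow> X \<in> C_hom B C \<longrightarrow>
        sDet (X * Y) = D_comp B (sDet X) (sDet Y)"
  proof (intro allI impI)
    fix A B C :: "nat list" and X Y
    assume Y: "Y \<in> C_hom A B" and X: "X \<in> C_hom B C"
    have Yc: "Y \<in> carrier_mat (length B) (length A)" and Xc: "X \<in> carrier_mat (length C) (length B)"
      using X Y unfolding C_hom_def by auto
    show "sDet (X * Y) = D_comp B (sDet X) (sDet Y)"
    proof (rule ext, rule ext)
      fix I K show "sDet (X * Y) I K = D_comp B (sDet X) (sDet Y) I K"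
        unfolding D_comp_def sDet_comp[OF Yc Xc] ..
    qed
  qed
  have P4: "sDet (1\<^sub>m 0) = D_id []" using P2 by (metis list.size(3))
  have P5: "\<forall>A B A' B' X Y. X \<in> C_hom A B \<longrightarrow> Y \<in> C_hom A' B' \<longrightarrow>
        sDet (C_tensor X Y) = D_tensor A B (sDet X) (sDet Y)"
  proof (intro allI impI)
    fix A B A' B' :: "nat list" and X Y
    assume X: "X \<in> C_hom A B" and Y: "Y \<in> C_hom A' B'"
    have Xc: "X \<in> carrier_mat (length B) (length A)" and Yc: "Y \<in> carrier_mat (length B') (length A')"
      using X Y unfolding C_hom_def by auto
    show "sDet (C_tensor X Y) = D_tensor A B (sDet X) (sDet Y)"
    proof (rule ext, rule ext)
      fix I K show "sDet (C_tensor X Y) I K = D_tensor A B (sDet X) (sDet Y) I K"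
        unfolding D_tensor_def sDet_tensor[OF Xc Yc] ..
    qed
  qed
  have P6: "\<forall>A B f. (A, B, f) \<in> D_mor \<longrightarrow> (\<exists>X \<in> C_hom A B. f = sDet X)"
    using D_mor_full by blast
  have P7: "\<forall>A B X Y. X \<in> C_hom A B \<longrightarrow> Y \<in> C_hom A B \<longrightarrow> sDet X = sDet Y \<longrightarrow> X = Y"
  proof (intro allI impI)
    fix A B :: "nat list" and X Y
    assume X: "X \<in> C_hom A B" and Y: "Y \<in> C_hom A B" and e: "sDet X = sDet Y"
    have Xc: "X \<in> carrier_mat (length B) (length A)" and Yc: "Y \<in> carrier_mat (length B) (length A)"
      using X Y unfolding C_hom_def by auto
    show "X = Y"
    proof (rule eq_matI)
      fix i j assume i: "i < dim_row Y" and j: "j < dim_col Y"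
      have "X $$ (i,j) = sDet X {i} {j}" using i j Xc Yc by (intro sDet_single[symmetric]) auto
      also have "\<dots> = sDet Y {i} {j}" unfolding e ..
      also have "\<dots> = Y $$ (i,j)" using i j by (intro sDet_single)
      finally show "X $$ (i,j) = Y $$ (i,j)" .
    qed (insert Xc Yc, auto)
  qed
  show ?thesis using P1 P2 P3 P4 P5 P6 P7 by blast
qed

end
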